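(* Let $M\ge1$, let $k\in\{0\}\times\mathbb{Z}_+^M$ and let $m\in\mathbb{Z}^{M+1}$ with $0\leq m\leq\min\{k,\tilde{k}\}$. Then \[ \#\left\{\mathsf{p}\in\mathsf{S}_M^\prime\,|\,(\kappa^\prime(\mathsf{p}),\beta^\prime(\mathsf{p}))=(k,m)\right\}=\binom{k}{m}\binom{\tilde{k}}{m}. \]
   Context: Fix depths $z_{-1}<z_0<\cdots<z_M<z_{M+1}$; $\mathbb{Z}_+$ denotes the nonnegative integers. A transmission scattering sequence is a finite sequence $\mathsf{p}=(\mathsf{p}_0,\ldots,\mathsf{p}_L)$ with $\mathsf{p}_0=z_{-1}$, $\mathsf{p}_L=z_{M+1}$, $\mathsf{p}_i\in\{z_0,\ldots,z_M\}$ for $1\le i\le L-1$, and for every $0\le i\le L-1$ there is $-1\le j\le M$ with $\{\mathsf{p}_i,\mathsf{p}_{i+1}\}=\{z_j,z_{j+1}\}$; $\mathsf{S}_M^\prime$ is the set of these. For $0\le n\le M$, consider the maximal runs of consecutive indices $i$ with $\mathsf{p}_i\in\{z_n,\ldots,z_{M+1}\}$; the last one (containing index $L$) is the trunk run. $k_n$ is the number of non-trunk runs and $m_n$ the number of non-trunk runs of length at least 2; $\kappa^\prime(\mathsf{p})=(k_0,\ldots,k_M)$, $\beta^\prime(\mathsf{p})=(m_0,\ldots,m_M)$. Notation: $\tilde{k}=(k_1,\ldots,k_M,0)$; $\min$ and $\le$ entrywise; $0$ the zero vector; $\binom{x}{y}=\prod_{n=0}^M\binom{x_n}{y_n}$.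 *)

theory Defs
  imports Complex_Main
begin

text \<open>Depths are given by z :: int => real, strictly increasing on {-1..M+1};
  z j is the depth z_j.  A sequence (p_0,...,p_L) is a nonempty real list, L = length p - 1.\<close>

definition trans_seq :: "(int \<Rightarrow> real) \<Rightarrow> nat \<Rightarrow> real list \<Rightarrow> bool" where
  "trans_seq z M p \<longleftrightarrow> p \<noteq> [] \<and> p ! 0 = z (-1) \<and> p ! (length p - 1) = z (int M + 1)
     \<and> (\<forall>i. 1 \<le> i \<and> i + 2 \<le> length p \<longrightarrow> p ! i \<in> z ` {0..int M})
     \<and> (\<forall>i. i + 1 < length p \<longrightarrow> (\<exists>j\<in>{-1..int M}. {p ! i, p ! (i+1)} = {z j, z (j+1)}))"

definition S_M' :: "(int \<Rightarrow> real) \<Rightarrow> nat \<Rightarrow> real list set" where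
  "S_M' z M = {p. trans_seq z M p}"

definition is_run :: "(nat \<Rightarrow> bool) \<Rightarrow> nat \<Rightarrow> nat \<Rightarrow> nat \<Rightarrow> bool" where
  "is_run P L a b \<longleftrightarrow> a \<le> b \<and> b \<le> L \<and> (\<forall>i\<in>{a..b}. P i)
     \<and> (a = 0 \<or> \<not> P (a - 1)) \<and> (b = L \<or> \<not> P (b + 1))"

text \<open>Runs of indices i with p_i in {z_n,...,z_{M+1}}; the trunk run is the one containing L.\<close>
definition runs_of :: "(int \<Rightarrow> real) \<Rightarrow> nat \<Rightarrow> real list \<Rightarrow> int \<Rightarrow> (nat \<times> nat) set" where
  "runs_of z M p n = {(a, b). is_run (\<lambda>i. p ! i \<in> z ` {n..int M + 1}) (length p - 1) a b}"

definition k_n :: "(int \<Rightarrow> real) \<Rightarrow> nat \<Rightarrow> real list \<Rightarrow> int \<Rightarrow> nat" where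
  "k_n z M p n = card {(a, b) \<in> runs_of z M p n. b \<noteq> length p - 1}"

definition m_n :: "(int \<Rightarrow> real) \<Rightarrow> nat \<Rightarrow> real list \<Rightarrow> int \<Rightarrow> nat" where
  "m_n z M p n = card {(a, b) \<in> runs_of z M p n. b \<noteq> length p - 1 \<and> b - a + 1 \<ge> 2}"

definition kappa' :: "(int \<Rightarrow> real) \<Rightarrow> nat \<Rightarrow> real list \<Rightarrow> nat list" where
  "kappa' z M p = map (k_n z M p) [0..int M]"

definition beta' :: "(int \<Rightarrow> real) \<Rightarrow> nat \<Rightarrow> real list \<Rightarrow> nat list" where
  "beta' z M p = map (m_n z M p) [0..int M]"

definition ktilde :: "nat list \<Rightarrow> nat list" where
  "ktilde k = tl k @ [0]"

definition binom_vec :: "nat \<Rightarrow> nat list \<Rightarrow> nat list \<Rightarrow> nat" where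
  "binom_vec M x y = (\<Prod>n\<le>M. (x ! n) choose (y ! n))"

end

theory Submission
  imports Defs
begin


fun cnt2 :: "(int \<Rightarrow> int \<Rightarrow> bool) \<Rightarrow> int list \<Rightarrow> nat" where
  "cnt2 P (x # y # xs) = (if P x y then 1 else 0) + cnt2 P (y # xs)"
| "cnt2 P _ = 0"

fun cnt3 :: "(int \<Rightarrow> int \<Rightarrow> int \<Rightarrow> bool) \<Rightarrow> int list \<Rightarrow> nat" where
  "cnt3 P (x # y # z # xs) = (if P x y z then 1 else 0) + cnt3 P (y # z # xs)"
| "cnt3 P _ = 0"

definition rep :: "int \<Rightarrow> nat \<Rightarrow> int list" where
  "rep t j = concat (replicate j [t+1, t])"

lemma rep_0[simp]: "rep t 0 = []" by (simp add: rep_def)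
lemma rep_Suc[simp]: "rep t (Suc j) = (t+1) # t # rep t j" by (simp add: rep_def)

fun ex :: "int \<Rightarrow> int list \<Rightarrow> nat list \<Rightarrow> int list" where
  "ex t [] c = []"
| "ex t (x # xs) [] = x # ex t xs []"
| "ex t (x # xs) (j # c) = (if x = t then x # rep t j @ ex t xs c else x # ex t xs (j # c))"

lemma ex_Nil2[simp]: "ex t xs [] = xs"
  by (induction xs) auto

lemma ex_notT: "x \<noteq> t \<Longrightarrow> ex t (x # xs) c = x # ex t xs c"
  by (cases c) auto

lemma ex_empty_iff[simp]: "ex t xs c = [] \<longleftrightarrow> xs = []"
  by (cases xs; cases c) auto

lemma hd_ex: "xs \<noteq> [] \<Longrightarrow> hd (ex t xs c) = hd xs"
  by (cases xs; cases c) auto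

lemma last_rep: "last (t # rep t j) = t"
  by (induction j) auto

lemma last_ex: "xs \<noteq> [] \<Longrightarrow> last (ex t xs c) = last xs"
proof (induction t xs c rule: ex.induct)
  case (3 t x xs j c)
  show ?case
  proof (cases "x = t")
    case True
    then show ?thesis using 3 last_rep[of t j]
      by (cases xs) (auto simp: last_append)
  next
    case False
    then show ?thesis using 3 by (cases xs) auto
  qed
qed auto

lemma set_rep: "set (rep t j) \<subseteq> {t, t+1}"
  by (induction j) auto

lemma set_ex1: "set xs \<subseteq> set (ex t xs c)"
  by (induction t xs c rule: ex.induct) auto

lemma set_ex2: "set (ex t xs c) \<subseteq> set xs \<union> {t, t+1}"
  by (induction t xs c rule: ex.induct) (auto dest: set_rep[THEN subsetD])

lemma tl_ex1: "set (tl xs) \<subseteq> set (tl (ex t xs c))"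
  by (cases xs; cases c) (auto dest: set_ex1[THEN subsetD])

lemma tl_ex2: "set (tl (ex t xs c)) \<subseteq> set (tl xs) \<union> {t, t+1}"
  by (cases xs; cases c) (auto dest: set_ex2[THEN subsetD] set_rep[THEN subsetD])



lemma cnt2_Cons: "cnt2 P (u # L) = (if L = [] then 0 else (if P u (hd L) then 1 else 0)) + cnt2 P L"
  by (cases L) auto

lemma cnt3_Cons: "cnt3 P (u # L) = (if length L < 2 then 0 else (if P u (L!0) (L!1) then 1 else 0)) + cnt3 P L"
  by (cases L; cases "tl L") auto

definition pp :: "(int \<Rightarrow> int \<Rightarrow> bool) \<Rightarrow> int \<Rightarrow> nat" where
  "pp P t = (if P t (t+1) then 1 else 0) + (if P (t+1) t then 1 else 0)"

lemma cnt2_rep: "cnt2 P (t # rep t j @ R) = j * pp P t + cnt2 P (t # R)"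
  by (induction j) (auto simp: pp_def)

lemma cnt2_ex_u: "length c = count_list xs t \<Longrightarrow>
   cnt2 P (u # ex t xs c) = cnt2 P (u # xs) + sum_list c * pp P t"
proof (induction t xs c arbitrary: u rule: ex.induct)
  case (3 t x xs j c)
  show ?case
  proof (cases "x = t")
    case True
    with 3 have "length c = count_list xs t" by simp
    with 3 True have IH: "cnt2 P (t # ex t xs c) = cnt2 P (t # xs) + sum_list c * pp P t" by simp
    show ?thesis using True IH cnt2_rep[of P t j "ex t xs c"]
      by (simp add: algebra_simps)
  next
    case False
    with 3 show ?thesis by simp
  qed
qed auto

lemma cnt2_ex: "length c = count_list xs t \<Longrightarrow>
   cnt2 P (ex t xs c) = cnt2 P xs + sum_list c * pp P t"
proof (cases xs)
  case (Cons x xs')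
  assume len: "length c = count_list xs t"
  show ?thesis
  proof (cases "x = t")
    case True
    then obtain j c' where c: "c = j # c'" using len Cons by (cases c) auto
    have "length c' = count_list xs' t" using len Cons c True by simp
    then show ?thesis using Cons c True cnt2_ex_u[of c' xs' t P t] cnt2_rep[of P t j "ex t xs' c'"]
      by (simp add: algebra_simps)
  next
    case False
    then show ?thesis using Cons len cnt2_ex_u[of c xs' t P x] by (simp add: ex_notT)
  qed
qed simp

definition midbad :: "(int \<Rightarrow> int \<Rightarrow> int \<Rightarrow> bool) \<Rightarrow> int \<Rightarrow> bool" where
  "midbad P t \<longleftrightarrow> (\<forall>a b d. P a b d \<longrightarrow> b \<noteq> t \<and> b \<noteq> t + 1)"

lemma cnt3_skip: "midbad P t \<Longrightarrow> (b = t \<or> b = t+1) \<Longrightarrow> cnt3 P (a # b # Z) = cnt3 P (b # Z)"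
  by (cases Z) (auto simp: midbad_def)

lemma cnt3_rep: "midbad P t \<Longrightarrow> cnt3 P (t # rep t j @ R) = cnt3 P (t # R)"
  by (induction j) (auto simp: cnt3_skip midbad_def)

lemma cnt3_ex_u: "midbad P t \<Longrightarrow> length c = count_list xs t \<Longrightarrow>
   cnt3 P (u # ex t xs c) = cnt3 P (u # xs)"
proof (induction t xs c arbitrary: u rule: ex.induct)
  case (3 t x xs j c)
  show ?case
  proof (cases "x = t")
    case True
    with 3 have "length c = count_list xs t" by simp
    with 3 True have IH: "cnt3 P (t # ex t xs c) = cnt3 P (t # xs)" by simp
    show ?thesis using True IH cnt3_rep[of P t j "ex t xs c"] 3(3)
      by (simp add: cnt3_skip)
  next
    case False
    with 3 have IH: "cnt3 P (x # ex t xs (j # c)) = cnt3 P (x # xs)" by simp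
    show ?thesis
    proof (cases xs)
      case Nil then show ?thesis using False by simp
    next
      case (Cons y ys)
      have h: "hd (ex t xs (j#c)) = y" using Cons hd_ex by simp
      have ne: "ex t xs (j#c) \<noteq> []" using Cons by simp
      then obtain r where r: "ex t xs (j#c) = y # r" using h by (cases "ex t xs (j#c)") auto
      show ?thesis using False IH r Cons by simp
    qed
  qed
qed auto

lemma cnt3_ex: "midbad P t \<Longrightarrow> length c = count_list xs t \<Longrightarrow>
   cnt3 P (ex t xs c) = cnt3 P xs"
proof (cases xs)
  case (Cons x xs')
  assume mb: "midbad P t" and len: "length c = count_list xs t"
  show ?thesis
  proof (cases "x = t")
    case True
    then obtain j c' where c: "c = j # c'" using len Cons by (cases c) auto
    have "length c' = count_list xs' t" using len Cons c True by simp
    then show ?thesis using Cons c True cnt3_ex_u[OF mb, of c' xs' t] cnt3_rep[OF mb, of j "ex t xs' c'"]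
      by simp
  next
    case False
    then show ?thesis using Cons len cnt3_ex_u[OF mb, of c xs' x] by (simp add: ex_notT)
  qed
qed simp

lemma succ_rep: "P t (t+1) \<Longrightarrow> P (t+1) t \<Longrightarrow> successively P (t # rep t j @ R) \<longleftrightarrow> successively P (t # R)"
  by (induction j) auto

lemma succ_ex_u: "P t (t+1) \<Longrightarrow> P (t+1) t \<Longrightarrow> successively P (u # ex t xs c) \<longleftrightarrow> successively P (u # xs)"
proof (induction t xs c arbitrary: u rule: ex.induct)
  case (3 t x xs j c)
  show ?case
  proof (cases "x = t")
    case True
    with 3 have IH: "successively P (t # ex t xs c) = successively P (t # xs)" by simp
    show ?thesis using True IH succ_rep[of P t j "ex t xs c", OF 3(3,4)] by simp
  next
    case False
    with 3 show ?thesis by simp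
  qed
qed auto

lemma succ_ex: "P t (t+1) \<Longrightarrow> P (t+1) t \<Longrightarrow> successively P (ex t xs c) \<longleftrightarrow> successively P xs"
proof (cases xs)
  case (Cons x xs')
  assume a: "P t (t+1)" "P (t+1) t"
  show ?thesis
  proof (cases c)
    case Nil then show ?thesis by simp
  next
    case (Cons j c')
    show ?thesis
    proof (cases "x = t")
      case True
      then show ?thesis using \<open>xs = _\<close> Cons succ_ex_u[OF a, of t xs' c'] succ_rep[OF a, of j "ex t xs' c'"] by simp
    next
      case False
      then show ?thesis using \<open>xs = _\<close> Cons succ_ex_u[OF a, of x xs' c] by simp
    qed
  qed
qed simp



abbreviation stp :: "int \<Rightarrow> int \<Rightarrow> bool" where "stp a b \<equiv> \<bar>a - b\<bar> = 1"

definition Qb :: "int \<Rightarrow> int list \<Rightarrow> bool" where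
  "Qb t xs \<longleftrightarrow> xs \<noteq> [] \<and> last xs = t \<and> set xs \<subseteq> {..t} \<and> successively stp xs"

lemma Qb_tl: "Qb t (x # xs) \<Longrightarrow> xs \<noteq> [] \<Longrightarrow> Qb t xs"
  by (auto simp: Qb_def successively_Cons)

lemma Qb_hd: "Qb t (x # xs) \<Longrightarrow> xs \<noteq> [] \<Longrightarrow> \<bar>x - hd xs\<bar> = 1"
  by (auto simp: Qb_def successively_Cons)

lemma Qb_le: "Qb t xs \<Longrightarrow> y \<in> set xs \<Longrightarrow> y \<le> t"
  by (auto simp: Qb_def)

definition PPt :: "int \<Rightarrow> int \<Rightarrow> int \<Rightarrow> int \<Rightarrow> bool" where
  "PPt t a b d \<longleftrightarrow> a = t+1 \<and> b = t \<and> d = t-1"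

lemma cnt3_PP_skip: "u \<noteq> t+1 \<Longrightarrow> cnt3 (PPt t) (u # L) = cnt3 (PPt t) L"
  by (cases L; cases "tl L") (auto simp: PPt_def)

lemma cnt3_PP_rep: "cnt3 (PPt t) (rep t j @ R) = cnt3 (PPt t) R + (if 0 < j \<and> R \<noteq> [] \<and> hd R = t-1 then 1 else 0)"
proof (induction j)
  case (Suc j)
  have "cnt3 (PPt t) (rep t (Suc j) @ R) = (if rep t j @ R = [] then 0 else (if hd (rep t j @ R) = t - 1 then 1 else 0))
     + cnt3 (PPt t) (t # rep t j @ R)"
    by (cases "rep t j @ R") (auto simp: PPt_def)
  also have "cnt3 (PPt t) (t # rep t j @ R) = cnt3 (PPt t) (rep t j @ R)"
    by (rule cnt3_PP_skip) simp
  finally show ?case using Suc by (cases j) auto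
qed simp

lemma filter_butlast_Cons: "length (filter ((<) 0) (butlast (j # c))) =
   (if c = [] then 0 else (if 0 < j then 1 else 0) + length (filter ((<) (0::nat)) (butlast c)))"
  by (cases c) auto

lemma cnt3_PP_ex: "Qb t xs \<Longrightarrow> length c = count_list xs t \<Longrightarrow>
   cnt3 (PPt t) (ex t xs c) = length (filter ((<) 0) (butlast c))"
proof (induction xs arbitrary: c)
  case Nil then show ?case by (simp add: Qb_def)
next
  case (Cons x xs)
  show ?case
  proof (cases "x = t")
    case False
    then have ne: "xs \<noteq> []" using Cons.prems by (auto simp: Qb_def)
    have "x \<le> t" using Cons.prems Qb_le by auto
    then have "x \<noteq> t+1" by simp
    then have "cnt3 (PPt t) (ex t (x # xs) c) = cnt3 (PPt t) (ex t xs c)"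
      using False by (simp add: ex_notT cnt3_PP_skip)
    also have "\<dots> = length (filter ((<) 0) (butlast c))"
      using Cons.IH[OF Qb_tl[OF Cons.prems(1) ne]] Cons.prems(2) False by simp
    finally show ?thesis .
  next
    case True
    then obtain j c' where c: "c = j # c'" using Cons.prems by (cases c) auto
    have len: "length c' = count_list xs t" using Cons.prems c True by simp
    show ?thesis
    proof (cases "xs = []")
      case True
      then show ?thesis using c len \<open>x = t\<close> cnt3_PP_rep[of t j "[]"] cnt3_PP_skip[of t t "rep t j"] by simp
    next
      case False
      have q: "Qb t xs" using Qb_tl[OF Cons.prems(1) False] .
      have "hd xs \<le> t" using q False Qb_le by auto
      moreover have "\<bar>x - hd xs\<bar> = 1" using Qb_hd[OF Cons.prems(1) False] .
      ultimately have hdx: "hd xs = t - 1" using \<open>x = t\<close> by auto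
      have "t \<in> set xs" using q by (auto simp: Qb_def)
      then have "c' \<noteq> []" using len by (auto simp: count_list_0_iff)
      have "cnt3 (PPt t) (ex t (x # xs) c) = cnt3 (PPt t) (rep t j @ ex t xs c')"
        using c \<open>x = t\<close> by (simp add: cnt3_PP_skip)
      also have "\<dots> = cnt3 (PPt t) (ex t xs c') + (if 0 < j then 1 else 0)"
        using cnt3_PP_rep[of t j "ex t xs c'"] False hd_ex[OF False] hdx by simp
      also have "\<dots> = length (filter ((<) 0) (butlast c))"
        using Cons.IH[OF q len] c \<open>c' \<noteq> []\<close> filter_butlast_Cons by simp
      finally show ?thesis .
    qed
  qed
qed

lemma count_Qb: "Qb t xs \<Longrightarrow> count_list xs t = cnt2 (\<lambda>a b. a = t \<and> b = t-1) xs + 1"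
proof (induction xs)
  case Nil then show ?case by (simp add: Qb_def)
next
  case (Cons x xs)
  show ?case
  proof (cases "xs = []")
    case True then show ?thesis using Cons.prems by (simp add: Qb_def)
  next
    case False
    have q: "Qb t xs" using Qb_tl[OF Cons.prems False] .
    have h: "\<bar>x - hd xs\<bar> = 1" using Qb_hd[OF Cons.prems False] .
    have "hd xs \<le> t" using q False Qb_le by auto
    then have "x = t \<longrightarrow> hd xs = t - 1" using h by auto
    then show ?thesis using Cons.IH[OF q] False by (simp add: cnt2_Cons)
  qed
qed

lemma count_list_0_iff': "count_list xs x = 0 \<longleftrightarrow> x \<notin> set xs"
  by (simp add: count_list_0_iff)



fun strip :: "int \<Rightarrow> int list \<Rightarrow> nat \<times> int list" where
  "strip t (a # b # xs) = (if a = t+1 \<and> b = t then (Suc (fst (strip t xs)), snd (strip t xs)) else (0, a # b # xs))"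
| "strip t xs = (0, xs)"

lemma strip_len: "length (snd (strip t xs)) \<le> length xs"
  by (induction t xs rule: strip.induct) auto

lemma strip_eq: "rep t (fst (strip t xs)) @ snd (strip t xs) = xs"
  by (induction t xs rule: strip.induct) auto

lemma strip_max: "snd (strip t xs) = a # b # r \<Longrightarrow> \<not> (a = t+1 \<and> b = t)"
  by (induction t xs rule: strip.induct) (auto split: if_splits)

function dec :: "int \<Rightarrow> int list \<Rightarrow> int list \<times> nat list" where
  "dec t [] = ([], [])"
| "dec t (x # xs) = (if x = t then (t # fst (dec t (snd (strip t xs))), fst (strip t xs) # snd (dec t (snd (strip t xs))))
      else (x # fst (dec t xs), snd (dec t xs)))"
  by pat_completeness auto
termination
  by (relation "measure (\<lambda>(t, xs). length xs)") (auto simp: le_imp_less_Suc strip_len)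

lemma ex_dec: "ex t (fst (dec t xs)) (snd (dec t xs)) = xs"
proof (induction t xs rule: dec.induct)
  case (2 t x xs)
  show ?case
  proof (cases "x = t")
    case True
    then show ?thesis using 2(1) strip_eq[of t xs] by simp
  next
    case False
    then show ?thesis using 2 by (simp add: ex_notT)
  qed
qed simp

lemma len_dec: "length (snd (dec t xs)) = count_list (fst (dec t xs)) t"
  by (induction t xs rule: dec.induct) auto

lemma dec_ne: "xs \<noteq> [] \<Longrightarrow> fst (dec t xs) \<noteq> []"
  by (cases xs) auto

lemma hd_dec: "xs \<noteq> [] \<Longrightarrow> hd (fst (dec t xs)) = hd xs"
  by (cases xs) auto

definition NP :: "int \<Rightarrow> int \<Rightarrow> int \<Rightarrow> int \<Rightarrow> bool" where
  "NP t a b d \<longleftrightarrow> a = t \<and> b = t+1 \<and> d = t"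

lemma nrm_dec: "cnt3 (NP t) (fst (dec t xs)) = 0"
proof (induction t xs rule: dec.induct)
  case (2 t x xs)
  show ?case
  proof (cases "x = t")
    case True
    define r where "r = snd (strip t xs)"
    have IH: "cnt3 (NP t) (fst (dec t r)) = 0" using 2(1) True r_def by simp
    have "cnt3 (NP t) (t # fst (dec t r)) = 0"
    proof (cases r)
      case Nil then show ?thesis by simp
    next
      case (Cons a r')
      show ?thesis
      proof (cases "a = t")
        case True
        have d: "fst (dec t r) = t # fst (dec t (snd (strip t r')))" using Cons True by simp
        show ?thesis using IH d by (subst cnt3_Cons) (auto simp: NP_def)
      next
        case False
        have d: "fst (dec t r) = a # fst (dec t r')" using Cons False by simp
        have "r' \<noteq> [] \<longrightarrow> \<not> (a = t+1 \<and> hd r' = t)"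
          using strip_max[of t xs a "hd r'" "tl r'"] Cons r_def by (cases r') auto
        then have hh: "fst (dec t r') \<noteq> [] \<Longrightarrow> a = t+1 \<Longrightarrow> hd (fst (dec t r')) \<noteq> t"
          by (cases r') (auto simp: hd_dec)
        show ?thesis using IH d hh by (cases "fst (dec t r')") (auto simp: NP_def)
      qed
    qed
    then show ?thesis using True r_def by simp
  next
    case False
    have IH: "cnt3 (NP t) (fst (dec t xs)) = 0" using 2 False by simp
    have d: "fst (dec t (x#xs)) = x # fst (dec t xs)" using False by simp
    show ?thesis unfolding d using IH False by (subst cnt3_Cons) (auto simp: NP_def)
  qed
qed simp

lemma strip_rep: "\<not> (\<exists>r. R = (t+1) # t # r) \<Longrightarrow> strip t (rep t j @ R) = (j, R)"
proof (induction j)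
  case 0 then show ?case by (cases R; cases "tl R") auto
qed auto

lemma dec_ex: "cnt2 (\<lambda>a b. a = t+1 \<and> b = t) xs = 0 \<Longrightarrow> length c = count_list xs t \<Longrightarrow>
   dec t (ex t xs c) = (xs, c)"
proof (induction xs arbitrary: c)
  case Nil then show ?case by simp
next
  case (Cons x xs)
  have c0: "cnt2 (\<lambda>a b. a = t+1 \<and> b = t) xs = 0" using Cons.prems(1) by (simp add: cnt2_Cons)
  show ?case
  proof (cases "x = t")
    case True
    then obtain j c' where c: "c = j # c'" using Cons.prems by (cases c) auto
    have len: "length c' = count_list xs t" using Cons.prems c True by simp
    have nst: "\<not> (\<exists>r. ex t xs c' = (t+1) # t # r)"
    proof
      assume "\<exists>r. ex t xs c' = (t+1) # t # r"
      then obtain r where r: "ex t xs c' = (t+1) # t # r" by auto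
      then have "xs \<noteq> []" by auto
      then obtain y ys where xs: "xs = y # ys" by (cases xs) auto
      then have y: "y = t+1" using r hd_ex[of xs t c'] by simp
      then have "ex t xs c' = (t+1) # ex t ys c'" using xs by (simp add: ex_notT)
      then have "ex t ys c' = t # r" using r by simp
      then have "ys \<noteq> [] \<and> hd ys = t" using hd_ex[of ys t c'] by (cases ys) auto
      then show False using c0 xs y by (cases ys) auto
    qed
    have "ex t (x # xs) c = t # (rep t j @ ex t xs c')" using True c by simp
    then show ?thesis using strip_rep[OF nst] Cons.IH[OF c0 len] True c by simp
  next
    case False
    then show ?thesis using Cons.IH[OF c0] Cons.prems(2) by (simp add: ex_notT)
  qed
qed



definition body :: "int \<Rightarrow> int list \<Rightarrow> bool" where
  "body T B \<longleftrightarrow> B \<noteq> [] \<and> hd B = -1 \<and> last B = T \<and> successively stp B \<and> set (tl B) \<subseteq> {0..T}"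

definition D2 :: "int \<Rightarrow> int list \<Rightarrow> nat" where "D2 n B = cnt2 (\<lambda>a b. a = n \<and> b = n-1) B"
definition D3 :: "int \<Rightarrow> int list \<Rightarrow> nat" where "D3 n B = cnt3 (PPt n) B"

lemma set_hd_tl: "xs \<noteq> [] \<Longrightarrow> set xs = insert (hd xs) (set (tl xs))"
  by (cases xs) auto

lemma body_set: "body T B \<Longrightarrow> T \<ge> -1 \<Longrightarrow> set B \<subseteq> {-1..T}"
  unfolding body_def by (subst set_hd_tl) auto

lemma body_Qb: "body T B \<Longrightarrow> T \<ge> -1 \<Longrightarrow> Qb T B"
  using body_set[of T B] by (auto simp: body_def Qb_def)

lemma cnt2_snoc: "cnt2 P (xs @ [y]) = cnt2 P xs + (if xs \<noteq> [] \<and> P (last xs) y then 1 else 0)"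
  by (induction xs rule: induct_list012) auto

lemma cnt3_snoc_no: "(\<And>a b. \<not> P a b y) \<Longrightarrow> cnt3 P (xs @ [y]) = cnt3 P xs"
proof (induction xs rule: induct_list012)
  case (3 x y' zs)
  then show ?case by (cases zs) auto
qed auto

lemma cnt2_none: "(\<And>x y. x \<in> set xs \<Longrightarrow> \<not> P x y) \<Longrightarrow> cnt2 P xs = 0"
  by (induction xs rule: induct_list012) auto

lemma cnt3_none: "(\<And>x y z. x \<in> set xs \<Longrightarrow> \<not> P x y z) \<Longrightarrow> cnt3 P xs = 0"
proof (induction xs rule: induct_list012)
  case (3 x y zs)
  then show ?case by (cases zs) auto
qed auto

lemma midbad_PPt: "n + 1 \<le> t \<Longrightarrow> midbad (PPt n) t"
  by (auto simp: midbad_def PPt_def)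

locale stepctx =
  fixes t :: int and B :: "int list" and c :: "nat list"
  assumes t0: "t \<ge> 0" and bd: "body t B" and len: "length c = count_list B t"
begin

definition NB where "NB = ex t B c @ [t+1]"

lemma Bne: "B \<noteq> []" using bd by (simp add: body_def)
lemma Bset: "set B \<subseteq> {-1..t}" using body_set[OF bd] t0 by simp

lemma body_NB: "body (t+1) NB"
proof -
  have ne: "ex t B c \<noteq> []" using Bne by simp
  have s1: "successively stp (ex t B c)" using succ_ex[of stp t B c] bd by (simp add: body_def)
  have l: "last (ex t B c) = t" using last_ex[OF Bne] bd by (simp add: body_def)
  have h: "set (tl B) \<subseteq> {0..t}" using bd by (simp add: body_def)
  have "set (tl (ex t B c)) \<subseteq> {0..t+1}"
  proof
    fix x assume "x \<in> set (tl (ex t B c))"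
    then have "x \<in> set (tl B) \<or> x = t \<or> x = t+1" using tl_ex2[of t B c] by blast
    then show "x \<in> {0..t+1}" using h t0 by auto
  qed
  moreover have "tl NB = tl (ex t B c) @ [t+1]" using ne by (simp add: NB_def)
  ultimately have "set (tl NB) \<subseteq> {0..t+1}" using t0 by auto
  then show ?thesis using ne s1 l hd_ex[OF Bne, of t c] bd
    by (auto simp: body_def NB_def successively_append_iff hd_append)
qed

lemma D2_NB: "n \<le> t+1 \<Longrightarrow> D2 n NB = D2 n B + (if n = t+1 then sum_list c else 0)"
  unfolding D2_def NB_def using cnt2_ex[OF len, of "\<lambda>a b. a = n \<and> b = n-1"]
  by (simp add: cnt2_snoc pp_def)

lemma D3_NB_low: "n + 1 \<le> t \<Longrightarrow> D3 n NB = D3 n B"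
  unfolding D3_def NB_def
  by (subst cnt3_snoc_no) (auto simp: PPt_def cnt3_ex[OF midbad_PPt len])

lemma Qb_B: "Qb t B" using body_Qb[OF bd] t0 by simp

lemma D3_NB_t: "D3 t NB = length (filter ((<) 0) (butlast c))"
  unfolding D3_def NB_def
  by (subst cnt3_snoc_no) (auto simp: PPt_def cnt3_PP_ex[OF Qb_B len])

lemma D3_NB_top: "D3 (t+1) NB = 0"
proof -
  have "set NB \<subseteq> {-1..t+1}" using body_set[OF body_NB] t0 by simp
  then show ?thesis unfolding D3_def by (intro cnt3_none) (auto simp: PPt_def)
qed

lemma D3_B_t: "D3 t B = 0"
  using Bset unfolding D3_def by (intro cnt3_none) (auto simp: PPt_def)

lemma D2_B_top: "D2 (t+1) B = 0"
  using Bset unfolding D2_def by (intro cnt2_none) auto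

lemma count_B: "count_list B t = D2 t B + 1"
  using count_Qb[OF Qb_B] t0 by (simp add: D2_def)

lemma dec_NB: "dec t (butlast NB) = (B, c)"
proof -
  have "cnt2 (\<lambda>a b. a = t+1 \<and> b = t) B = 0" using Bset by (intro cnt2_none) auto
  then show ?thesis using dec_ex[OF _ len] by (simp add: NB_def)
qed

end



lemma cnt3_pos: "P a b d \<Longrightarrow> cnt3 P (as @ a # b # d # bs) > 0"
proof (induction as)
  case (Cons x as)
  then show ?case by (subst append_Cons, subst cnt3_Cons) simp
qed simp

lemma back_dir:
  assumes t0: "t \<ge> 0" and bd: "body (t+1) NB"
  defines "B \<equiv> fst (dec t (butlast NB))" and "c \<equiv> snd (dec t (butlast NB))"
  shows "body t B" "length c = count_list B t" "ex t B c @ [t+1] = NB"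
proof -
  define B0 where "B0 = butlast NB"
  have NBne: "NB \<noteq> []" and hdN: "hd NB = -1" and lN: "last NB = t+1" and sN: "successively stp NB"
    and tN: "set (tl NB) \<subseteq> {0..t+1}" using bd by (auto simp: body_def)
  have setN: "set NB \<subseteq> {-1..t+1}" using body_set[OF bd] t0 by simp
  have NBeq: "NB = B0 @ [t+1]" using NBne lN unfolding B0_def by (metis append_butlast_last_id)
  have B0ne: "B0 \<noteq> []" using NBeq hdN t0 by auto
  have sB0: "successively stp B0" and st: "stp (last B0) (t+1)"
    using sN B0ne unfolding NBeq by (auto simp: successively_append_iff)
  have "last B0 \<in> set NB" using B0ne NBeq by simp
  then have lB0: "last B0 = t" using st setN by fastforce
  have hB0: "hd B0 = -1" using hdN B0ne NBeq by simp
  have exB: "ex t B c = B0" using ex_dec[of t B0] by (simp add: B_def c_def B0_def)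
  have Bne: "B \<noteq> []" using dec_ne[OF B0ne] by (simp add: B_def B0_def)
  have hB: "hd B = -1" using hd_dec[OF B0ne, of t] hB0 by (simp add: B_def B0_def)
  have lB: "last B = t" using last_ex[OF Bne, of t c] exB lB0 by simp
  have sB: "successively stp B" using succ_ex[of stp t B c] exB sB0 by simp
  have setB: "set B \<subseteq> {-1..t+1}" using set_ex1[of B t c] exB setN NBeq by auto
  have "set (tl B0) \<subseteq> set (tl NB)" using NBeq B0ne by (cases B0) auto
  then have tB: "set (tl B) \<subseteq> {0..t+1}" using tl_ex1[of B t c] exB tN by auto
  have nrm: "cnt3 (NP t) B = 0" using nrm_dec by (simp add: B_def)
  have notin: "t+1 \<notin> set B"
  proof
    assume "t+1 \<in> set B"
    then obtain ys zs where B: "B = ys @ (t+1) # zs" by (meson split_list)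
    have ysne: "ys \<noteq> []" using B hB t0 by auto
    have zsne: "zs \<noteq> []" using B lB by auto
    have s1: "stp (last ys) (t+1)" "stp (t+1) (hd zs)" using sB ysne zsne unfolding B
      by (auto simp: successively_append_iff successively_Cons)
    have "last ys \<in> set B" "hd zs \<in> set B" using B ysne zsne by auto
    then have e: "last ys = t" "hd zs = t" using s1 setB by fastforce+
    have "B = butlast ys @ t # (t+1) # t # tl zs" using B ysne zsne e
      by (metis append.assoc append_Cons append_butlast_last_id append_self_conv2 list.collapse)
    then have "cnt3 (NP t) B > 0" using cnt3_pos[of "NP t" t "t+1" t] by (simp add: NP_def)
    then show False using nrm by simp
  qed
  have tB': "set (tl B) \<subseteq> {0..t}"
  proof
    fix x assume x: "x \<in> set (tl B)"
    then have "x \<in> set B" by (cases B) auto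
    moreover have "x \<in> {0..t+1}" using x tB by blast
    ultimately show "x \<in> {0..t}" using notin by (cases "x = t+1") auto
  qed
  show "body t B" using Bne hB lB sB tB' by (simp add: body_def)
  show "length c = count_list B t" using len_dec by (simp add: B_def c_def)
  show "ex t B c @ [t+1] = NB" using exB NBeq by simp
qed

lemma count_body: "body t B \<Longrightarrow> t \<ge> 0 \<Longrightarrow> count_list B t = D2 t B + 1"
  using count_Qb[OF body_Qb] by (simp add: D2_def)

definition BS :: "nat \<Rightarrow> nat list \<Rightarrow> nat list \<Rightarrow> int list set" where
  "BS M k m = {B. body (int M) B \<and> (\<forall>n\<le>M. D2 (int n) B = k!n \<and> D3 (int n) B = m!n)}"

definition CS :: "nat \<Rightarrow> nat \<Rightarrow> nat \<Rightarrow> nat list set" where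
  "CS a s b = {c. length c = Suc a \<and> sum_list c = s \<and> length (filter ((<) 0) (butlast c)) = b}"

lemma memXY:
  assumes "(B, c) \<in> BS M k m' \<times> CS (k!M) s b"
  shows "body (int M) B \<and> length c = count_list B (int M)"
proof -
  have b: "body (int M) B" and d: "D2 (int M) B = k!M" and l: "length c = Suc (k!M)"
    using assms unfolding BS_def CS_def by auto
  show ?thesis using b count_body[OF b] d l by simp
qed

lemma step_bij:
  assumes m0: "m ! Suc M = 0" and lm: "M \<le> length m"
  shows "bij_betw (\<lambda>(B, c). ex (int M) B c @ [int M + 1])
     (BS M k (take M m @ [0]) \<times> CS (k!M) (k!Suc M) (m!M)) (BS (Suc M) k m)"
proof -
  let ?t = "int M"
  let ?f = "\<lambda>(B, c). ex (int M) B c @ [int M + 1]"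
  let ?m' = "take M m @ [0]"
  have mi: "n \<le> M \<Longrightarrow> ?m' ! n = (if n < M then m ! n else 0)" for n
    using lm by (cases "n < M") (auto simp: nth_append min_def)
  have fwd_stats: "(\<forall>n\<le>M. D2 (int n) B = k!n \<and> D3 (int n) B = ?m'!n) \<and> length c = Suc (k!M)
        \<and> sum_list c = k!Suc M \<and> length (filter ((<) 0) (butlast c)) = m!M
      \<longleftrightarrow> (\<forall>n\<le>Suc M. D2 (int n) (ex ?t B c @ [?t+1]) = k!n \<and> D3 (int n) (ex ?t B c @ [?t+1]) = m!n)"
    if "body ?t B" "length c = count_list B ?t" for B c
  proof -
    interpret stepctx ?t B c using that by unfold_locales auto
    have A: "n \<le> M \<Longrightarrow> D2 (int n) NB = D2 (int n) B" for n using D2_NB[of "int n"] by simp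
    have A2: "D2 (int (Suc M)) NB = sum_list c" using D2_NB[of "int M + 1"] D2_B_top by (simp add: add.commute)
    have C: "n < M \<Longrightarrow> D3 (int n) NB = D3 (int n) B" for n using D3_NB_low[of "int n"] by simp
    have C2: "D3 (int M) NB = length (filter ((<) 0) (butlast c))" using D3_NB_t by simp
    have C3: "D3 (int (Suc M)) NB = 0" using D3_NB_top by (simp add: add.commute)
    have lc: "length c = Suc (D2 (int M) B)" using count_B that(2) by simp
    have D3B: "D3 (int M) B = 0" using D3_B_t by simp
    show ?thesis unfolding NB_def[symmetric]
    proof
      assume H: "(\<forall>n\<le>M. D2 (int n) B = k!n \<and> D3 (int n) B = ?m'!n) \<and> length c = Suc (k!M)
        \<and> sum_list c = k!Suc M \<and> length (filter ((<) 0) (butlast c)) = m!M"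
      show "\<forall>n\<le>Suc M. D2 (int n) NB = k!n \<and> D3 (int n) NB = m!n"
      proof (intro allI impI)
        fix n assume n: "n \<le> Suc M"
        show "D2 (int n) NB = k!n \<and> D3 (int n) NB = m!n"
        proof (cases "n = Suc M")
          case True then show ?thesis using H A2 C3 m0 by simp
        next
          case False
          then have "n \<le> M" using n by simp
          then show ?thesis using H A C C2 mi[of n] by (cases "n = M") (auto simp: NB_def)
        qed
      qed
    next
      assume H: "\<forall>n\<le>Suc M. D2 (int n) NB = k!n \<and> D3 (int n) NB = m!n"
      have "\<forall>n\<le>M. D2 (int n) B = k!n \<and> D3 (int n) B = ?m'!n"
      proof (intro allI impI)
        fix n assume n: "n \<le> M"
        then show "D2 (int n) B = k!n \<and> D3 (int n) B = ?m'!n"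
          using H[rule_format, of n] A[OF n] C mi[OF n] D3B by (cases "n = M") auto
      qed
      moreover have "length c = Suc (k!M)" using lc H[rule_format, of M] A[of M] by simp
      moreover have "sum_list c = k!Suc M" using H[rule_format, of "Suc M"] A2 by simp
      moreover have "length (filter ((<) 0) (butlast c)) = m!M" using H[rule_format, of M] C2 by simp
      ultimately show "(\<forall>n\<le>M. D2 (int n) B = k!n \<and> D3 (int n) B = ?m'!n) \<and> length c = Suc (k!M)
        \<and> sum_list c = k!Suc M \<and> length (filter ((<) 0) (butlast c)) = m!M" by simp
    qed
  qed
  show ?thesis
  proof (rule bij_betwI')
    fix x y assume x: "x \<in> BS M k ?m' \<times> CS (k!M) (k!Suc M) (m!M)" and y: "y \<in> BS M k ?m' \<times> CS (k!M) (k!Suc M) (m!M)"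
    obtain B c where xe: "x = (B, c)" by (cases x)
    obtain B' c' where ye: "y = (B', c')" by (cases y)
    have "(B,c) \<in> BS M k ?m' \<times> CS (k!M) (k!Suc M) (m!M)" using x xe by simp
    from memXY[OF this] have bx: "body ?t B" "length c = count_list B ?t" by auto
    have "(B',c') \<in> BS M k ?m' \<times> CS (k!M) (k!Suc M) (m!M)" using y ye by simp
    from memXY[OF this] have by': "body ?t B'" "length c' = count_list B' ?t" by auto
    interpret X: stepctx ?t B c using bx by unfold_locales auto
    interpret Y: stepctx ?t B' c' using by' by unfold_locales auto
    show "(?f x = ?f y) = (x = y)"
    proof
      assume "?f x = ?f y"
      then have "X.NB = Y.NB" using xe ye unfolding X.NB_def Y.NB_def by (simp only: prod.case)
      then have "(B,c) = (B',c')" using X.dec_NB Y.dec_NB by metis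
      then show "x = y" using xe ye by (simp only:)
    qed simp
  next
    fix x assume x: "x \<in> BS M k ?m' \<times> CS (k!M) (k!Suc M) (m!M)"
    obtain B c where xe: "x = (B, c)" by (cases x)
    have "(B,c) \<in> BS M k ?m' \<times> CS (k!M) (k!Suc M) (m!M)" using x xe by simp
    from memXY[OF this] have bx: "body ?t B" "length c = count_list B ?t" by auto
    interpret X: stepctx ?t B c using bx by unfold_locales auto
    have "(\<forall>n\<le>M. D2 (int n) B = k!n \<and> D3 (int n) B = ?m'!n) \<and> length c = Suc (k!M)
        \<and> sum_list c = k!Suc M \<and> length (filter ((<) 0) (butlast c)) = m!M"
      using x xe unfolding BS_def CS_def by simp
    then have "\<forall>n\<le>Suc M. D2 (int n) X.NB = k!n \<and> D3 (int n) X.NB = m!n"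
      using fwd_stats[OF bx] unfolding X.NB_def by blast
    moreover have "body (int (Suc M)) X.NB" using X.body_NB by (simp add: add.commute)
    ultimately show "?f x \<in> BS (Suc M) k m"
      using xe unfolding BS_def X.NB_def by simp
  next
    fix NB assume NB: "NB \<in> BS (Suc M) k m"
    have bd: "body (?t + 1) NB" using NB by (simp add: BS_def add.commute)
    obtain B c where dc: "dec ?t (butlast NB) = (B, c)" by (cases "dec ?t (butlast NB)")
    have t0: "(0::int) \<le> ?t" by simp
    have b1: "body ?t B" and b2: "length c = count_list B ?t" and b3: "ex ?t B c @ [?t+1] = NB"
      using back_dir[OF t0 bd] unfolding dc by (simp_all only: fst_conv snd_conv)
    have st: "\<forall>n\<le>Suc M. D2 (int n) NB = k!n \<and> D3 (int n) NB = m!n" using NB by (simp add: BS_def)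
    have "(\<forall>n\<le>M. D2 (int n) B = k!n \<and> D3 (int n) B = ?m'!n) \<and> length c = Suc (k!M)
        \<and> sum_list c = k!Suc M \<and> length (filter ((<) 0) (butlast c)) = m!M"
      using fwd_stats[OF b1 b2] st unfolding b3 by blast
    then have "dec ?t (butlast NB) \<in> BS M k ?m' \<times> CS (k!M) (k!Suc M) (m!M)"
      using b1 unfolding dc BS_def CS_def by blast
    moreover have "NB = ?f (dec ?t (butlast NB))"
      using b3 unfolding dc by (simp only: prod.case)
    ultimately show "\<exists>x\<in>BS M k ?m' \<times> CS (k!M) (k!Suc M) (m!M). NB = ?f x" by (rule bexI[rotated])
  qed
qed



lemma hockey: "(\<Sum>y<s. y choose b) = s choose Suc b"
  by (induction s) auto

lemma hockey2: "(\<Sum>x\<in>{1..s}. (s - x) choose b) = s choose Suc b"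
proof -
  have "(\<Sum>x\<in>{1..s}. (s - x) choose b) = (\<Sum>y<s. y choose b)"
    by (rule sum.reindex_bij_witness[of _ "\<lambda>y. s - y" "\<lambda>x. s - x"]) auto
  then show ?thesis using hockey by simp
qed

lemma CS_fin: "finite (CS a s b)"
proof -
  have "CS a s b \<subseteq> {c. set c \<subseteq> {0..s} \<and> length c = Suc a}"
  proof
    fix c assume "c \<in> CS a s b"
    then have l: "length c = Suc a" and "sum_list c = s" by (auto simp: CS_def)
    then have "\<forall>x\<in>set c. x \<le> s" using member_le_sum_list by fastforce
    then show "c \<in> {c. set c \<subseteq> {0..s} \<and> length c = Suc a}" using l by auto
  qed
  then show ?thesis by (rule finite_subset) (rule finite_lists_length_eq, simp)
qed

lemma CS_0: "CS 0 s b = (if b = 0 then {[s]} else {})"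
proof -
  have "c \<in> CS 0 s b \<longleftrightarrow> b = 0 \<and> c = [s]" for c
    by (cases c) (auto simp: CS_def)
  then show ?thesis by auto
qed

lemma CS_Suc0: "CS (Suc a) s 0 = Cons 0 ` CS a s 0"
proof -
  have "c \<in> CS (Suc a) s 0 \<longleftrightarrow> (\<exists>c'. c = 0 # c' \<and> c' \<in> CS a s 0)" for c
  proof (cases c)
    case (Cons x c')
    show ?thesis
    proof (cases c')
      case Nil then show ?thesis using Cons by (auto simp: CS_def)
    next
      case (Cons y c'')
      then show ?thesis using \<open>c = x # c'\<close> by (auto simp: CS_def)
    qed
  qed (auto simp: CS_def)
  then show ?thesis by auto
qed

lemma CS_SucSuc: "CS (Suc a) s (Suc b) = Cons 0 ` CS a s (Suc b) \<union>
    (\<lambda>(x, c). x # c) ` (SIGMA x:{1..s}. CS a (s - x) b)"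
proof -
  have "c \<in> CS (Suc a) s (Suc b) \<longleftrightarrow> (\<exists>c'. c = 0 # c' \<and> c' \<in> CS a s (Suc b)) \<or>
      (\<exists>x c'. c = x # c' \<and> x \<in> {1..s} \<and> c' \<in> CS a (s - x) b)" for c
  proof (cases c)
    case (Cons x c')
    show ?thesis
    proof (cases c')
      case Nil then show ?thesis using Cons by (auto simp: CS_def)
    next
      case (Cons y c'')
      then show ?thesis using \<open>c = x # c'\<close> by (auto simp: CS_def)
    qed
  qed (auto simp: CS_def)
  then show ?thesis
    apply (intro set_eqI)
    apply (simp only: Un_iff)
    apply (rule iffI)
     apply (force simp: image_iff)
    apply (force simp: image_iff)
    done
qed

lemma card_CS: "card (CS a s b) = (a choose b) * (s choose b)"
proof (induction a arbitrary: s b)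
  case 0
  then show ?case by (cases b) (auto simp: CS_0)
next
  case (Suc a)
  show ?case
  proof (cases b)
    case 0
    then show ?thesis using Suc CS_Suc0 by (simp add: card_image)
  next
    case (Suc b')
    have d: "Cons 0 ` CS a s (Suc b') \<inter> (\<lambda>(x, c). x # c) ` (SIGMA x:{1..s}. CS a (s - x) b') = {}"
      by auto
    have i: "inj_on (\<lambda>(x, c). x # c) (SIGMA x:{1..s}. CS a (s - x) b')"
      by (auto simp: inj_on_def)
    have "card (CS (Suc a) s b) = card (Cons 0 ` CS a s (Suc b')) + card ((\<lambda>(x, c). x # c) ` (SIGMA x:{1..s}. CS a (s - x) b'))"
      unfolding Suc CS_SucSuc by (rule card_Un_disjoint) (auto simp: CS_fin d)
    also have "\<dots> = card (CS a s (Suc b')) + (\<Sum>x\<in>{1..s}. card (CS a (s - x) b'))"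
      by (subst card_image[OF i], subst card_SigmaI) (auto simp: CS_fin card_image inj_on_def)
    also have "\<dots> = (a choose Suc b') * (s choose Suc b') + (a choose b') * (\<Sum>x\<in>{1..s}. (s - x) choose b')"
      using Suc.IH by (simp add: sum_distrib_left)
    also have "\<dots> = (Suc a choose b) * (s choose b)"
      using hockey2[of s b'] Suc by (simp add: algebra_simps)
    finally show ?thesis .
  qed
qed



lemma prod_split: "(\<Prod>n\<le>(M::nat). f n) = (\<Prod>n<M. f n) * (f M :: nat)"
proof -
  have "{..M} = insert M {..<M}" by auto
  then show ?thesis by (simp add: mult.commute)
qed

lemma ktilde_nth: "n < length k \<Longrightarrow> ktilde k ! n = (if Suc n < length k then k ! Suc n else 0)"
  by (cases k) (auto simp: ktilde_def nth_append)

lemma body0: "body 0 B \<longleftrightarrow> B = [-1, 0]"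
proof
  assume b: "body 0 B"
  then obtain r where B: "B = -1 # r" by (cases B) (auto simp: body_def)
  have r0: "set r \<subseteq> {0}" and rl: "last (-1 # r) = 0" and s: "successively stp (-1 # r)"
    using b B by (auto simp: body_def)
  then have "r \<noteq> []" by auto
  then obtain y r' where r: "r = y # r'" by (cases r) auto
  have y: "y = 0" using r0 r by auto
  have "r' = []"
  proof (rule ccontr)
    assume "r' \<noteq> []"
    then obtain z r'' where "r' = z # r''" by (cases r') auto
    then show False using s r0 r y by auto
  qed
  then show "B = [-1, 0]" using B r y by simp
qed (auto simp: body_def)

lemma BS0: assumes "k!0 = 0" "m!0 = 0" shows "BS 0 k m = {[-1, 0]}"
  using assms by (auto simp: BS_def body0 D2_def D3_def)

lemma main_count:
  "length k = Suc M \<Longrightarrow> length m = Suc M \<Longrightarrow> k!0 = 0 \<Longrightarrow> (\<forall>n\<le>M. m!n \<le> min (k!n) (ktilde k ! n)) \<Longrightarrow>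
   card (BS M k m) = binom_vec M k m * binom_vec M (ktilde k) m"
proof (induction M arbitrary: k m)
  case 0
  then have "m!0 = 0" by auto
  moreover have "ktilde k = [0]" using 0 by (cases k) (auto simp: ktilde_def)
  ultimately show ?case using 0 BS0 by (simp add: binom_vec_def)
next
  case (Suc M)
  define k' where "k' = take (Suc M) k"
  define m' where "m' = take M m @ [0]"
  have lk': "length k' = Suc M" using Suc.prems by (simp add: k'_def)
  have lm': "length m' = Suc M" using Suc.prems by (simp add: m'_def)
  have k'n: "n \<le> M \<Longrightarrow> k'!n = k!n" for n by (simp add: k'_def)
  have m'n: "n \<le> M \<Longrightarrow> m'!n = (if n < M then m!n else 0)" for n
    using Suc.prems by (cases "n < M") (auto simp: m'_def nth_append)
  have ktk: "n \<le> Suc M \<Longrightarrow> ktilde k ! n = (if n < Suc M then k ! Suc n else 0)" for n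
    using ktilde_nth[of n k] Suc.prems by simp
  have ktk': "n \<le> M \<Longrightarrow> ktilde k' ! n = (if n < M then k ! Suc n else 0)" for n
    using ktilde_nth[of n k'] lk' Suc.prems(1) by (simp add: k'_def)
  have m0: "m ! Suc M = 0" using Suc.prems(4) ktk[of "Suc M"] by auto
  have IH: "card (BS M k' m') = binom_vec M k' m' * binom_vec M (ktilde k') m'"
  proof (rule Suc.IH[OF lk' lm'])
    show "k'!0 = 0" using Suc.prems k'n[of 0] by simp
    show "\<forall>n\<le>M. m'!n \<le> min (k'!n) (ktilde k' ! n)"
    proof (intro allI impI)
      fix n assume n: "n \<le> M"
      show "m'!n \<le> min (k'!n) (ktilde k' ! n)"
      proof (cases "n < M")
        case True
        have "m!n \<le> min (k!n) (ktilde k ! n)" using Suc.prems(4) n by simp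
        then show ?thesis using m'n[OF n] k'n[OF n] ktk'[OF n] ktk[of n] n True by simp
      next
        case False
        then show ?thesis using m'n n by simp
      qed
    qed
  qed
  have bij: "bij_betw (\<lambda>(B, c). ex (int M) B c @ [int M + 1])
     (BS M k m' \<times> CS (k!M) (k!Suc M) (m!M)) (BS (Suc M) k m)"
    unfolding m'_def by (rule step_bij[OF m0]) (use Suc.prems in simp)
  have "BS M k m' = BS M k' m'"
    unfolding BS_def using k'n by auto
  then have "card (BS (Suc M) k m) = card (BS M k' m') * card (CS (k!M) (k!Suc M) (m!M))"
    using bij_betw_same_card[OF bij] by (simp add: card_cartesian_product)
  also have "\<dots> = binom_vec M k' m' * binom_vec M (ktilde k') m' * ((k!M choose m!M) * (k!Suc M choose m!M))"
    using IH card_CS by simp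
  also have "\<dots> = binom_vec (Suc M) k m * binom_vec (Suc M) (ktilde k) m"
  proof -
    have mM: "m'!M = 0" using m'n[of M] by simp
    have p1: "(\<Prod>n<M. k'!n choose m'!n) = (\<Prod>n<M. k!n choose m!n)"
      by (rule prod.cong) (simp_all add: k'n m'n)
    have p2: "(\<Prod>n<M. ktilde k'!n choose m'!n) = (\<Prod>n<M. ktilde k!n choose m!n)"
      by (rule prod.cong) (simp_all add: ktk' ktk m'n)
    have e1: "binom_vec M k' m' = (\<Prod>n<M. k!n choose m!n)"
      unfolding binom_vec_def prod_split p1 mM by simp
    have e2: "binom_vec M (ktilde k') m' = (\<Prod>n<M. ktilde k!n choose m!n)"
      unfolding binom_vec_def prod_split p2 mM by simp
    have e3: "binom_vec (Suc M) k m = (\<Prod>n<M. k!n choose m!n) * (k!M choose m!M)"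
      unfolding binom_vec_def prod.atMost_Suc prod_split using m0 by simp
    have e4: "binom_vec (Suc M) (ktilde k) m = (\<Prod>n<M. ktilde k!n choose m!n) * (k!Suc M choose m!M)"
      unfolding binom_vec_def prod.atMost_Suc prod_split using m0 ktk by simp
    show ?thesis unfolding e1 e2 e3 e4 by (simp add: algebra_simps)
  qed
  finally show ?case .
qed



lemma run_start: "(Q :: nat \<Rightarrow> bool) b \<Longrightarrow> \<exists>a\<le>b. (\<forall>i\<in>{a..b}. Q i) \<and> (a = 0 \<or> \<not> Q (a - 1))"
proof (induction b)
  case 0 then show ?case by auto
next
  case (Suc b)
  show ?case
  proof (cases "Q b")
    case True
    then obtain a where a: "a \<le> b" "\<forall>i\<in>{a..b}. Q i" "a = 0 \<or> \<not> Q (a - 1)" using Suc.IH by blast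
    have "\<forall>i\<in>{a..Suc b}. Q i" using a(2) Suc.prems by (auto simp: le_Suc_eq)
    then show ?thesis using a by (intro exI[of _ a]) auto
  next
    case False
    then show ?thesis using Suc.prems by (intro exI[of _ "Suc b"]) auto
  qed
qed

lemma run_unique: "is_run Q L a b \<Longrightarrow> is_run Q L a' b \<Longrightarrow> a = a'"
proof (rule ccontr)
  assume r: "is_run Q L a b" "is_run Q L a' b" and ne: "a \<noteq> a'"
  have *: "is_run Q L x b \<Longrightarrow> is_run Q L y b \<Longrightarrow> x < y \<Longrightarrow> False" for x y
  proof -
    assume rx: "is_run Q L x b" and ry: "is_run Q L y b" and xy: "x < y"
    then have "y \<noteq> 0" by simp
    then have "\<not> Q (y - 1)" using ry by (auto simp: is_run_def)
    moreover have "y - 1 \<in> {x..b}" using xy ry by (auto simp: is_run_def)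
    ultimately show False using rx by (auto simp: is_run_def)
  qed
  show False using ne *[OF r] *[OF r(2) r(1)] by (cases "a < a'") auto
qed

lemma runs_card1: "card {(a, b). is_run Q L a b \<and> b \<noteq> L} = card {b. b < L \<and> Q b \<and> \<not> Q (Suc b)}"
proof -
  have inj: "inj_on snd {(a, b). is_run Q L a b \<and> b \<noteq> L}"
    by (auto simp: inj_on_def intro: run_unique)
  have "snd ` {(a, b). is_run Q L a b \<and> b \<noteq> L} = {b. b < L \<and> Q b \<and> \<not> Q (Suc b)}"
  proof (intro set_eqI iffI)
    fix b assume "b \<in> snd ` {(a, b). is_run Q L a b \<and> b \<noteq> L}"
    then obtain a where "is_run Q L a b" "b \<noteq> L" by auto
    then show "b \<in> {b. b < L \<and> Q b \<and> \<not> Q (Suc b)}" by (auto simp: is_run_def)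
  next
    fix b assume b: "b \<in> {b. b < L \<and> Q b \<and> \<not> Q (Suc b)}"
    then obtain a where "a \<le> b" "\<forall>i\<in>{a..b}. Q i" "a = 0 \<or> \<not> Q (a - 1)" using run_start by blast
    then have "is_run Q L a b \<and> b \<noteq> L" using b by (auto simp: is_run_def)
    then show "b \<in> snd ` {(a, b). is_run Q L a b \<and> b \<noteq> L}" by force
  qed
  then show ?thesis using card_image[OF inj] by simp
qed

lemma runs_card2: "card {(a, b). is_run Q L a b \<and> b \<noteq> L \<and> 2 \<le> b - a + 1} =
   card {b. b < L \<and> Q b \<and> \<not> Q (Suc b) \<and> 0 < b \<and> Q (b - 1)}"
proof -
  have inj: "inj_on snd {(a, b). is_run Q L a b \<and> b \<noteq> L \<and> 2 \<le> b - a + 1}"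
    by (auto simp: inj_on_def intro: run_unique)
  have "snd ` {(a, b). is_run Q L a b \<and> b \<noteq> L \<and> 2 \<le> b - a + 1} = {b. b < L \<and> Q b \<and> \<not> Q (Suc b) \<and> 0 < b \<and> Q (b - 1)}"
  proof (intro set_eqI iffI)
    fix b assume "b \<in> snd ` {(a, b). is_run Q L a b \<and> b \<noteq> L \<and> 2 \<le> b - a + 1}"
    then obtain a where r: "is_run Q L a b" "b \<noteq> L" "2 \<le> b - a + 1" by auto
    then have "b - 1 \<in> {a..b}" by auto
    then show "b \<in> {b. b < L \<and> Q b \<and> \<not> Q (Suc b) \<and> 0 < b \<and> Q (b - 1)}" using r by (auto simp: is_run_def)
  next
    fix b assume b: "b \<in> {b. b < L \<and> Q b \<and> \<not> Q (Suc b) \<and> 0 < b \<and> Q (b - 1)}"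
    then obtain a where a: "a \<le> b" "\<forall>i\<in>{a..b}. Q i" "a = 0 \<or> \<not> Q (a - 1)" using run_start by blast
    have "a \<noteq> b" using a(3) b by auto
    then have "is_run Q L a b \<and> b \<noteq> L \<and> 2 \<le> b - a + 1" using a b by (auto simp: is_run_def)
    then show "b \<in> snd ` {(a, b). is_run Q L a b \<and> b \<noteq> L \<and> 2 \<le> b - a + 1}" by force
  qed
  then show ?thesis using card_image[OF inj] by simp
qed

lemma cnt2_card: "cnt2 P xs = card {i. Suc i < length xs \<and> P (xs!i) (xs!Suc i)}"
proof (induction P xs rule: cnt2.induct)
  case (1 P x y xs)
  have "{i. Suc i < length (x # y # xs) \<and> P ((x # y # xs)!i) ((x # y # xs)!Suc i)} =
      (if P x y then {0} else {}) \<union> Suc ` {i. Suc i < length (y # xs) \<and> P ((y # xs)!i) ((y # xs)!Suc i)}"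
    apply (rule set_eqI)
    subgoal for i by (cases i) (simp_all add: inj_image_mem_iff)
    done
  then show ?case using 1 by (simp add: card_image)
qed auto

lemma cnt3_card: "cnt3 P xs = card {i. Suc (Suc i) < length xs \<and> P (xs!i) (xs!Suc i) (xs!Suc (Suc i))}"
proof (induction P xs rule: cnt3.induct)
  case (1 P x y z xs)
  have "{i. Suc (Suc i) < length (x # y # z # xs) \<and> P ((x # y # z # xs)!i) ((x # y # z # xs)!Suc i) ((x # y # z # xs)!Suc (Suc i))} =
      (if P x y z then {0} else {}) \<union> Suc ` {i. Suc (Suc i) < length (y # z # xs) \<and> P ((y # z # xs)!i) ((y # z # xs)!Suc i) ((y # z # xs)!Suc (Suc i))}"
    apply (rule set_eqI)
    subgoal for i by (cases i) (simp_all add: inj_image_mem_iff)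
    done
  then show ?case using 1 by (simp add: card_image)
qed auto



definition Wint :: "nat \<Rightarrow> int list \<Rightarrow> bool" where
  "Wint M w \<longleftrightarrow> w \<noteq> [] \<and> w!0 = -1 \<and> w!(length w - 1) = int M + 1
     \<and> (\<forall>i. 1 \<le> i \<and> i + 2 \<le> length w \<longrightarrow> w!i \<in> {0..int M})
     \<and> (\<forall>i. i + 1 < length w \<longrightarrow> \<bar>w!i - w!(i+1)\<bar> = 1)"

lemma pair_step:
  fixes a b :: int
  assumes "inj_on z {-1..int M + 1}" "a \<in> {-1..int M + 1}" "b \<in> {-1..int M + 1}"
  shows "(\<exists>j\<in>{-1..int M}. {z a, z b} = {z j, z (j+1)}) \<longleftrightarrow> \<bar>a - b\<bar> = 1"
proof
  assume "\<exists>j\<in>{-1..int M}. {z a, z b} = {z j, z (j+1)}"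
  then obtain j where j: "j \<in> {-1..int M}" "{z a, z b} = {z j, z (j+1)}" by blast
  then have "z ` {a, b} = z ` {j, j+1}" by simp
  then have "{a, b} = {j, j+1}" using assms j(1) by (subst (asm) inj_on_image_eq_iff) auto
  then show "\<bar>a - b\<bar> = 1" by (auto simp: doubleton_eq_iff)
next
  assume d: "\<bar>a - b\<bar> = 1"
  show "\<exists>j\<in>{-1..int M}. {z a, z b} = {z j, z (j+1)}"
  proof (cases "a < b")
    case True
    then have "b = a + 1" using d by auto
    then show ?thesis using assms(2,3) by (intro bexI[of _ a]) auto
  next
    case False
    then have "a = b + 1" using d by auto
    then show ?thesis using assms(2,3) by (intro bexI[of _ b]) auto
  qed
qed

lemma trans_Wint:
  assumes inj: "inj_on z {-1..int M + 1}" and sw: "set w \<subseteq> {-1..int M + 1}"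
  shows "trans_seq z M (map z w) \<longleftrightarrow> Wint M w"
proof -
  let ?R = "{-1..int M + 1}"
  have mem: "i < length w \<Longrightarrow> w!i \<in> ?R" for i using sw nth_mem by blast
  have e1: "w \<noteq> [] \<Longrightarrow> z (w!0) = z (-1) \<longleftrightarrow> w!0 = -1"
    using inj mem[of 0] by (auto dest: inj_onD)
  have e2: "w \<noteq> [] \<Longrightarrow> z (w!(length w - 1)) = z (int M + 1) \<longleftrightarrow> w!(length w - 1) = int M + 1"
    using inj mem[of "length w - 1"] by (auto dest: inj_onD)
  have e3: "i < length w \<Longrightarrow> z (w!i) \<in> z ` {0..int M} \<longleftrightarrow> w!i \<in> {0..int M}" for i
    using inj mem[of i] by (intro inj_on_image_mem_iff) auto
  have e4: "i + 1 < length w \<Longrightarrow> (\<exists>j\<in>{-1..int M}. {z (w!i), z (w!(i+1))} = {z j, z (j+1)}) \<longleftrightarrow> \<bar>w!i - w!(i+1)\<bar> = 1" for i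
    using pair_step[OF inj mem[of i] mem[of "i+1"]] by simp
  have c1: "w \<noteq> [] \<Longrightarrow> (map z w ! 0 = z (-1)) = (w!0 = -1)" using e1 by simp
  have c2: "w \<noteq> [] \<Longrightarrow> (map z w ! (length (map z w) - 1) = z (int M + 1)) = (w!(length w - 1) = int M + 1)"
    using e2 by simp
  have c3: "(\<forall>i. 1 \<le> i \<and> i + 2 \<le> length (map z w) \<longrightarrow> map z w ! i \<in> z ` {0..int M}) =
      (\<forall>i. 1 \<le> i \<and> i + 2 \<le> length w \<longrightarrow> w!i \<in> {0..int M})"
    using e3 by simp
  have c4: "(\<forall>i. i + 1 < length (map z w) \<longrightarrow> (\<exists>j\<in>{-1..int M}. {map z w ! i, map z w ! (i+1)} = {z j, z (j+1)})) =
      (\<forall>i. i + 1 < length w \<longrightarrow> \<bar>w!i - w!(i+1)\<bar> = 1)"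
    using e4 by simp
  have c0: "(map z w \<noteq> []) = (w \<noteq> [])" by simp
  show ?thesis
    unfolding trans_seq_def Wint_def c0 c3 c4
    using c1 c2 by blast
qed

lemma Wint_body: "Wint M w \<longleftrightarrow> (\<exists>B. w = B @ [int M + 1] \<and> body (int M) B)"
proof
  assume W: "Wint M w"
  let ?L = "length w"
  define B where "B = butlast w"
  have wne: "w \<noteq> []" and w0: "w!0 = -1" and wl: "w!(?L - 1) = int M + 1"
    and wi: "\<And>i. 1 \<le> i \<Longrightarrow> i + 2 \<le> ?L \<Longrightarrow> w!i \<in> {0..int M}"
    and ws: "\<And>i. i + 1 < ?L \<Longrightarrow> \<bar>w!i - w!(i+1)\<bar> = 1" using W unfolding Wint_def by auto
  have L2: "?L \<ge> 2"
  proof (rule ccontr)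
    assume "\<not> ?L \<ge> 2"
    moreover have "?L > 0" using wne by simp
    ultimately have "?L = 1" by linarith
    then show False using w0 wl by simp
  qed
  have weq: "w = B @ [int M + 1]" unfolding B_def using wne wl
    by (metis append_butlast_last_id last_conv_nth)
  have lB: "length B = ?L - 1" by (simp add: B_def)
  have Bn: "i < ?L - 1 \<Longrightarrow> B!i = w!i" for i by (simp add: B_def nth_butlast)
  have Bne: "B \<noteq> []" using lB L2 by auto
  have hB: "hd B = -1" using Bne Bn[of 0] w0 L2 by (simp add: hd_conv_nth)
  have sB: "successively stp B"
    unfolding successively_conv_nth using ws Bn lB by auto
  have "?L - 2 \<noteq> 0"
  proof
    assume "?L - 2 = 0"
    then have "?L = 2" using L2 by simp
    then show False using ws[of 0] w0 wl by simp
  qed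
  then have "w!(?L - 2) \<in> {0..int M}" using wi[of "?L - 2"] L2 by simp
  moreover have "\<bar>w!(?L - 2) - w!(?L - 1)\<bar> = 1"
  proof -
    have "?L - 2 + 1 = ?L - 1" "?L - 2 + 1 < ?L" using L2 by auto
    then show ?thesis using ws[of "?L - 2"] by simp
  qed
  ultimately have "w!(?L - 2) = int M" using wl by auto
  then have lastB: "last B = int M"
  proof -
    assume h: "w!(?L - 2) = int M"
    have "length B - 1 = ?L - 2" using lB by simp
    moreover have "B!(?L-2) = int M" using Bn[of "?L-2"] L2 h by simp
    ultimately show ?thesis using Bne by (simp add: last_conv_nth)
  qed
  have tB: "set (tl B) \<subseteq> {0..int M}"
  proof
    fix x assume "x \<in> set (tl B)"
    then obtain j where j: "j < length (tl B)" "x = tl B ! j" by (auto simp: in_set_conv_nth)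
    then have "x = w!(Suc j)" using Bn[of "Suc j"] lB Bne by (simp add: nth_tl)
    then show "x \<in> {0..int M}" using wi[of "Suc j"] j lB by simp
  qed
  show "\<exists>B. w = B @ [int M + 1] \<and> body (int M) B"
    using weq Bne hB lastB sB tB by (auto simp: body_def)
next
  assume "\<exists>B. w = B @ [int M + 1] \<and> body (int M) B"
  then obtain B where w: "w = B @ [int M + 1]" and b: "body (int M) B" by blast
  have Bne: "B \<noteq> []" and hB: "hd B = -1" and lB: "last B = int M" and sB: "successively stp B"
    and tB: "set (tl B) \<subseteq> {0..int M}" using b by (auto simp: body_def)
  have sw: "successively stp w" using sB lB Bne unfolding w by (simp add: successively_append_iff)
  have "w!0 = -1" using w Bne hB by (simp add: nth_append hd_conv_nth)
  moreover have "w!(length w - 1) = int M + 1" using w by simp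
  moreover have "\<forall>i. 1 \<le> i \<and> i + 2 \<le> length w \<longrightarrow> w!i \<in> {0..int M}"
  proof (intro allI impI)
    fix i assume i: "1 \<le> i \<and> i + 2 \<le> length w"
    then have "w!i = B ! i" using w by (simp add: nth_append)
    also have "B ! i = tl B ! (i - 1)" using i Bne by (cases B) (auto simp: nth_Cons')
    finally have "w!i = tl B ! (i - 1)" .
    moreover have "i - 1 < length (tl B)"
    proof -
      have "i < length B" using i w by simp
      then show ?thesis using i by (simp; arith)
    qed
    ultimately have "w!i \<in> set (tl B)" by simp
    then show "w!i \<in> {0..int M}" using tB by blast
  qed
  moreover have "\<forall>i. i + 1 < length w \<longrightarrow> \<bar>w!i - w!(i+1)\<bar> = 1"
    using sw unfolding successively_conv_nth by simp
  moreover have "w \<noteq> []" using w by simp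
  ultimately show "Wint M w" unfolding Wint_def by blast
qed



lemma is_run_cong: "(\<And>i. i \<le> L \<Longrightarrow> Q i = Q' i) \<Longrightarrow> is_run Q L a b = is_run Q' L a b"
proof -
  assume h: "\<And>i. i \<le> L \<Longrightarrow> Q i = Q' i"
  show ?thesis
  proof (cases "a \<le> b \<and> b \<le> L")
    case True
    have 1: "(\<forall>i\<in>{a..b}. Q i) = (\<forall>i\<in>{a..b}. Q' i)" using h True by auto
    have "a - 1 \<le> L" using True by linarith
    then have 2: "(a = 0 \<or> \<not> Q (a - 1)) = (a = 0 \<or> \<not> Q' (a - 1))" using h by simp
    have 3: "(b = L \<or> \<not> Q (b + 1)) = (b = L \<or> \<not> Q' (b + 1))"
    proof (cases "b = L")
      case False
      then have "b + 1 \<le> L" using True by linarith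
      then show ?thesis using h by simp
    qed simp
    show ?thesis unfolding is_run_def using 1 2 3 by blast
  next
    case False
    then show ?thesis unfolding is_run_def by blast
  qed
qed

lemma stats:
  assumes inj: "inj_on z {-1..int M + 1}" and b: "body (int M) B" and n: "n \<le> M"
  defines "w \<equiv> B @ [int M + 1]"
  shows "k_n z M (map z w) (int n) = D2 (int n) B" "m_n z M (map z w) (int n) = D3 (int n) B"
proof -
  let ?p = "map z w"
  let ?L = "length w - 1"
  define Q' where "Q' = (\<lambda>i. int n \<le> w!i)"
  have Bne: "B \<noteq> []" and lB: "last B = int M" using b by (auto simp: body_def)
  have sw: "set w \<subseteq> {-1..int M + 1}" using body_set[OF b] by (auto simp: w_def)
  have succ: "successively stp w" using b lB Bne by (auto simp: body_def w_def successively_append_iff)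
  have st: "Suc i < length w \<Longrightarrow> \<bar>w!i - w!Suc i\<bar> = 1" for i using succ successively_nth by blast
  have lw: "length w = Suc (length B)" by (simp add: w_def)
  have eqQ: "i \<le> ?L \<Longrightarrow> (?p!i \<in> z ` {int n..int M + 1}) = Q' i" for i
  proof -
    assume i: "i \<le> ?L"
    then have il: "i < length w" using lw by simp
    then have m: "w!i \<in> {-1..int M + 1}" using sw nth_mem by blast
    have "?p!i = z (w!i)" using il by simp
    moreover have "(z (w!i) \<in> z ` {int n..int M + 1}) = (w!i \<in> {int n..int M + 1})"
      using inj m by (intro inj_on_image_mem_iff) auto
    ultimately show ?thesis using m by (auto simp: Q'_def)
  qed
  have runs: "runs_of z M ?p (int n) = {(a, b). is_run Q' ?L a b}"
  proof -
    have "is_run (\<lambda>i. ?p!i \<in> z ` {int n..int M + 1}) ?L a b = is_run Q' ?L a b" for a b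
      by (rule is_run_cong) (rule eqQ)
    then show ?thesis by (simp only: runs_of_def length_map)
  qed
  have D2w: "D2 (int n) B = cnt2 (\<lambda>a b. a = int n \<and> b = int n - 1) w"
    unfolding D2_def w_def cnt2_snoc using n by simp
  have D3w: "D3 (int n) B = cnt3 (PPt (int n)) w"
    unfolding D3_def w_def using n by (subst cnt3_snoc_no) (auto simp: PPt_def)
  have "k_n z M ?p (int n) = card {(a, b). is_run Q' ?L a b \<and> b \<noteq> ?L}"
    unfolding k_n_def runs by (rule arg_cong[where f = card]) auto
  also have "\<dots> = card {b. b < ?L \<and> Q' b \<and> \<not> Q' (Suc b)}" by (rule runs_card1)
  also have "{b. b < ?L \<and> Q' b \<and> \<not> Q' (Suc b)} = {i. Suc i < length w \<and> w!i = int n \<and> w!Suc i = int n - 1}"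
  proof (intro set_eqI iffI)
    fix i assume "i \<in> {b. b < ?L \<and> Q' b \<and> \<not> Q' (Suc b)}"
    then have i: "Suc i < length w" "int n \<le> w!i" "\<not> int n \<le> w!Suc i" by (auto simp: Q'_def)
    then show "i \<in> {i. Suc i < length w \<and> w!i = int n \<and> w!Suc i = int n - 1}" using st[OF i(1)] by auto
  next
    fix i assume "i \<in> {i. Suc i < length w \<and> w!i = int n \<and> w!Suc i = int n - 1}"
    then show "i \<in> {b. b < ?L \<and> Q' b \<and> \<not> Q' (Suc b)}" by (auto simp: Q'_def)
  qed
  also have "card {i. Suc i < length w \<and> w!i = int n \<and> w!Suc i = int n - 1} = D2 (int n) B"
    unfolding D2w cnt2_card by simp
  finally show "k_n z M ?p (int n) = D2 (int n) B" .
  have "m_n z M ?p (int n) = card {(a, b). is_run Q' ?L a b \<and> b \<noteq> ?L \<and> 2 \<le> b - a + 1}"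
    unfolding m_n_def runs by (rule arg_cong[where f = card]) auto
  also have "\<dots> = card {b. b < ?L \<and> Q' b \<and> \<not> Q' (Suc b) \<and> 0 < b \<and> Q' (b - 1)}" by (rule runs_card2)
  also have "{b. b < ?L \<and> Q' b \<and> \<not> Q' (Suc b) \<and> 0 < b \<and> Q' (b - 1)} =
      Suc ` {i. Suc (Suc i) < length w \<and> w!i = int n + 1 \<and> w!Suc i = int n \<and> w!Suc (Suc i) = int n - 1}"
  proof (intro set_eqI iffI)
    fix b assume "b \<in> {b. b < ?L \<and> Q' b \<and> \<not> Q' (Suc b) \<and> 0 < b \<and> Q' (b - 1)}"
    then have h: "Suc b < length w" "int n \<le> w!b" "\<not> int n \<le> w!Suc b" "0 < b" "int n \<le> w!(b - 1)"
      by (auto simp: Q'_def)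
    then obtain i where bi: "b = Suc i" by (cases b) auto
    have "\<bar>w!i - w!b\<bar> = 1" using st[of i] h(1) bi by simp
    moreover have "\<bar>w!b - w!Suc b\<bar> = 1" using st[OF h(1)] .
    ultimately have "w!i = int n + 1 \<and> w!b = int n \<and> w!Suc b = int n - 1" using h bi by auto
    then show "b \<in> Suc ` {i. Suc (Suc i) < length w \<and> w!i = int n + 1 \<and> w!Suc i = int n \<and> w!Suc (Suc i) = int n - 1}"
      using h(1) bi by auto
  next
    fix b assume "b \<in> Suc ` {i. Suc (Suc i) < length w \<and> w!i = int n + 1 \<and> w!Suc i = int n \<and> w!Suc (Suc i) = int n - 1}"
    then show "b \<in> {b. b < ?L \<and> Q' b \<and> \<not> Q' (Suc b) \<and> 0 < b \<and> Q' (b - 1)}" by (auto simp: Q'_def)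
  qed
  also have "card (Suc ` {i. Suc (Suc i) < length w \<and> w!i = int n + 1 \<and> w!Suc i = int n \<and> w!Suc (Suc i) = int n - 1})
      = card {i. Suc (Suc i) < length w \<and> w!i = int n + 1 \<and> w!Suc i = int n \<and> w!Suc (Suc i) = int n - 1}"
    by (simp add: card_image)
  also have "\<dots> = D3 (int n) B"
    unfolding D3w cnt3_card by (simp add: PPt_def)
  finally show "m_n z M ?p (int n) = D3 (int n) B" .
qed



lemma kappa_nth: "n \<le> M \<Longrightarrow> kappa' z M p ! n = k_n z M p (int n)"
  by (simp add: kappa'_def)

lemma beta_nth: "n \<le> M \<Longrightarrow> beta' z M p ! n = m_n z M p (int n)"
  by (simp add: beta'_def)

lemma kappa_len: "length (kappa' z M p) = Suc M" by (simp add: kappa'_def)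
lemma beta_len: "length (beta' z M p) = Suc M" by (simp add: beta'_def)

lemma list_eq_nth_M: "length xs = Suc M \<Longrightarrow> length ys = Suc M \<Longrightarrow> (xs = ys) = (\<forall>n\<le>M. xs!n = ys!n)"
  by (auto simp: list_eq_iff_nth_eq less_Suc_eq_le)

theorem lemma4:
  fixes z :: "int \<Rightarrow> real" and M :: nat and k m :: "nat list"
  assumes "strict_mono_on {-1..int M + 1} z"
    and "M \<ge> 1"
    and "length k = M + 1" and "k ! 0 = 0"
    and "length m = M + 1"
    and "\<forall>n\<le>M. m ! n \<le> min (k ! n) (ktilde k ! n)"
  shows "card {p \<in> S_M' z M. kappa' z M p = k \<and> beta' z M p = m}
           = binom_vec M k m * binom_vec M (ktilde k) m"
proof -
  let ?R = "{-1..int M + 1}"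
  have inj: "inj_on z ?R" using strict_mono_on_imp_inj_on[OF assms(1)] .
  define F where "F = (\<lambda>B. map z (B @ [int M + 1]))"
  have setB: "body (int M) B \<Longrightarrow> set (B @ [int M + 1]) \<subseteq> ?R" for B
    using body_set[of "int M" B] by auto
  have inS: "body (int M) B \<Longrightarrow> F B \<in> S_M' z M" for B
    unfolding F_def S_M'_def using trans_Wint[OF inj setB] Wint_body by auto
  have lk: "length k = Suc M" and lm: "length m = Suc M" using assms(3,5) by simp_all
  have kap: "body (int M) B \<Longrightarrow> (kappa' z M (F B) = k) = (\<forall>n\<le>M. D2 (int n) B = k!n)" for B
    unfolding F_def using list_eq_nth_M[OF kappa_len lk] kappa_nth stats(1)[OF inj] by simp
  have bet: "body (int M) B \<Longrightarrow> (beta' z M (F B) = m) = (\<forall>n\<le>M. D3 (int n) B = m!n)" for B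
    unfolding F_def using list_eq_nth_M[OF beta_len lm] beta_nth stats(2)[OF inj] by simp
  have S: "{p \<in> S_M' z M. kappa' z M p = k \<and> beta' z M p = m} = F ` BS M k m"
  proof (intro set_eqI iffI)
    fix p assume "p \<in> {p \<in> S_M' z M. kappa' z M p = k \<and> beta' z M p = m}"
    then have ts: "trans_seq z M p" and pk: "kappa' z M p = k" and pm: "beta' z M p = m"
      by (auto simp: S_M'_def)
    have sp: "set p \<subseteq> z ` ?R"
    proof
      fix x assume "x \<in> set p"
      then obtain i where i: "i < length p" "x = p!i" by (auto simp: in_set_conv_nth)
      show "x \<in> z ` ?R"
      proof (cases "i = 0")
        case True then show ?thesis using ts i by (auto simp: trans_seq_def)
      next
        case False
        show ?thesis
        proof (cases "i = length p - 1")
          case True then show ?thesis using ts i by (auto simp: trans_seq_def)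
        next
          case False
          then have "p!i \<in> z ` {0..int M}" using ts i \<open>i \<noteq> 0\<close> unfolding trans_seq_def by simp
          then show ?thesis using i by auto
        qed
      qed
    qed
    define w where "w = map (inv_into ?R z) p"
    have pw: "p = map z w" unfolding w_def using sp by (simp add: map_idI f_inv_into_f subset_iff)
    have sw: "set w \<subseteq> ?R" unfolding w_def using sp by (auto intro: inv_into_into)
    have "Wint M w" using trans_Wint[OF inj sw] ts pw by simp
    then obtain B where wB: "w = B @ [int M + 1]" and bB: "body (int M) B" using Wint_body by blast
    have pF: "p = F B" using pw wB F_def by simp
    have "B \<in> BS M k m" using kap[OF bB] bet[OF bB] pk pm pF bB by (simp add: BS_def)
    then show "p \<in> F ` BS M k m" using pF by blast
  next
    fix p assume "p \<in> F ` BS M k m"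
    then obtain B where B: "B \<in> BS M k m" "p = F B" by blast
    then have bB: "body (int M) B" by (simp add: BS_def)
    show "p \<in> {p \<in> S_M' z M. kappa' z M p = k \<and> beta' z M p = m}"
      using inS[OF bB] kap[OF bB] bet[OF bB] B by (simp add: BS_def)
  qed
  have injF: "inj_on F (BS M k m)"
  proof (rule inj_onI)
    fix B1 B2 assume b1: "B1 \<in> BS M k m" and b2: "B2 \<in> BS M k m" and e: "F B1 = F B2"
    have "set (B1 @ [int M + 1]) \<union> set (B2 @ [int M + 1]) \<subseteq> ?R"
      using setB b1 b2 by (auto simp: BS_def)
    then have "inj_on z (set (B1 @ [int M + 1]) \<union> set (B2 @ [int M + 1]))" using inj inj_on_subset by blast
    then show "B1 = B2" using e inj_on_map_eq_map unfolding F_def by fastforce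
  qed
  have "card {p \<in> S_M' z M. kappa' z M p = k \<and> beta' z M p = m} = card (BS M k m)"
    unfolding S using card_image[OF injF] .
  also have "\<dots> = binom_vec M k m * binom_vec M (ktilde k) m"
    using main_count[of k M m] assms by simp
  finally show ?thesis .
qed


end
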